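(* There is an absolute constant $C$ such that for all integers $m\ge 2$, $n\ge2$ and every $X\in\{0,1\}^{n\times n}$, if $(a_0,\dots,a_{\phi(m)-1})$ is the representation of $\mathrm{Per}_{\zeta_m}(X)$, then $$\max_{0\le i\le\phi(m)-1}\log|a_i|\le C\,(m^2\log m+n\log n)$$ (with the convention $\log 0=-\infty$).
   Context: For $z\in\mathbb{C}$ with $|z|=1$ and $X\in\mathbb{C}^{n\times n}$, the $z$-permanent is $\mathrm{Per}_z(X)=\sum_{\sigma\in S_n} z^{\ell(\sigma)}\prod_{i=1}^n X_{i,\sigma(i)}$, where $\ell(\sigma)$ is the inversion number of $\sigma$. $\zeta_m$ is a primitive $m$-th root of unity and $\phi$ is Euler's totient function. The representation of $\alpha\in\mathbb{Z}[\zeta_m]$ is the unique tuple of integers $(a_0,\dots,a_{\phi(m)-1})$ with $\alpha=\sum_{i=0}^{\phi(m)-1}a_i\zeta_m^i$ (equivalently, the remainder upon dividing an integer polynomial representing $\alpha$ by the $m$-th cyclotomic polynomial $\Phi_m$). *)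

theory Defs
  imports "HOL-Analysis.Analysis" "HOL-Number_Theory.Number_Theory"
begin

definition inv_num :: "nat \<Rightarrow> (nat \<Rightarrow> nat) \<Rightarrow> nat" where
  "inv_num n \<sigma> = card {(i, j). i < j \<and> j < n \<and> \<sigma> j < \<sigma> i}"

definition zper :: "complex \<Rightarrow> nat \<Rightarrow> (nat \<Rightarrow> nat \<Rightarrow> complex) \<Rightarrow> complex" where
  "zper z n X = (\<Sum>\<sigma> | \<sigma> permutes {..<n}. z ^ inv_num n \<sigma> * (\<Prod>i<n. X i (\<sigma> i)))"

definition primitive_root_unity :: "nat \<Rightarrow> complex \<Rightarrow> bool" where
  "primitive_root_unity m \<zeta> \<longleftrightarrow> \<zeta> ^ m = 1 \<and> (\<forall>k. 0 < k \<and> k < m \<longrightarrow> \<zeta> ^ k \<noteq> 1)"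

end

theory Submission
  imports Defs "Berlekamp_Zassenhaus.Factor_Bound"
begin

hide_const (open) up_ring.coeff up_ring.monom Module.smult
hide_const (open) comm_monoid_mult_class.coprime


definition ip :: "int poly \<Rightarrow> complex \<Rightarrow> complex" where
  "ip h z = poly (map_poly of_int h) z"

lemma ip_mult[simp]: "ip (p*q) z = ip p z * ip q z" unfolding ip_def by (simp add: hom_distribs)
lemma ip_add[simp]: "ip (p+q) z = ip p z + ip q z" unfolding ip_def by (simp add: hom_distribs)
lemma ip_diff[simp]: "ip (p-q) z = ip p z - ip q z" unfolding ip_def by (simp add: hom_distribs)
lemma ip_smult[simp]: "ip (smult c p) z = of_int c * ip p z" unfolding ip_def by (simp add: hom_distribs)
lemma ip_power[simp]: "ip (p^k) z = ip p z ^ k" unfolding ip_def by (simp add: hom_distribs)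
lemma ip_monom[simp]: "ip (monom c k) z = of_int c * z ^ k" unfolding ip_def by (simp add: poly_monom)
lemma ip_const[simp]: "ip [:c:] z = of_int c" using ip_monom[of c 0 z] by (simp add: monom_0)
lemma ip_pcompose[simp]: "ip (pcompose p q) z = ip p (ip q z)" 
  unfolding ip_def by (simp add: hom_distribs poly_pcompose)
lemma ip_one[simp]: "ip 1 z = 1" unfolding ip_def by simp
lemma ip_0[simp]: "ip 0 z = 0" unfolding ip_def by simp
lemma ip_sum: "ip (sum f A) z = (\<Sum>x\<in>A. ip (f x) z)" unfolding ip_def by (simp add: hom_distribs poly_sum)


lemma "coeff (p::int poly) 0 = 0 \<Longrightarrow> degree p = 0 \<Longrightarrow> lead_coeff p = 0" by simp



lemma int_fermat: fixes c :: int assumes p: "prime (p::nat)" shows "int p dvd c ^ p - c"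
proof (cases "int p dvd c")
  case True
  have "int p dvd c ^ p" by (meson True dvd_power dvd_trans p prime_gt_0_nat)
  thus ?thesis using True by simp
next
  case False
  define a where "a = nat (c mod int p)"
  have p0: "int p > 0" using p prime_gt_0_nat by simp
  have ca: "c mod int p = int a" unfolding a_def using p0 by simp
  have "\<not> p dvd a" using False ca by (metis dvd_eq_mod_eq_0 mod_mod_trivial of_nat_dvd_iff zmod_int)
  from fermat_theorem[OF p this] have "[a ^ (p - 1) = 1] (mod p)" .
  hence "[a ^ (p - 1) * a = 1 * a] (mod p)" by (rule cong_mult) simp
  hence "[a ^ p = a] (mod p)" using p prime_gt_0_nat by (simp add: power_eq_if mult.commute)
  hence "[int a ^ p = int a] (mod int p)" using cong_int_iff[of "a^p" a p] by simp
  moreover have "[c = int a] (mod int p)" unfolding cong_def using ca by (metis mod_mod_trivial)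
  ultimately have "[c ^ p = c] (mod int p)"
    by (meson cong_pow cong_sym cong_trans)
  thus ?thesis by (simp add: cong_iff_dvd_diff)
qed




definition pd :: "int \<Rightarrow> int poly \<Rightarrow> bool" where
  "pd p A \<longleftrightarrow> (\<exists>K. A = smult p K)"

lemma pd_0[simp]: "pd p 0" unfolding pd_def by (rule exI[of _ 0]) simp
lemma pd_smult[simp]: "pd p (smult p A)" unfolding pd_def by blast
lemma pd_add: "pd p A \<Longrightarrow> pd p B \<Longrightarrow> pd p (A + B)"
  unfolding pd_def by (metis smult_add_right)
lemma pd_diff: "pd p A \<Longrightarrow> pd p B \<Longrightarrow> pd p (A - B)"
  unfolding pd_def by (metis smult_diff_right)
lemma pd_uminus: "pd p A \<Longrightarrow> pd p (- A)"
  unfolding pd_def by (metis smult_minus_right)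
lemma pd_mult_left: "pd p A \<Longrightarrow> pd p (A * B)"
  unfolding pd_def by (metis mult_smult_left)
lemma pd_mult_right: "pd p A \<Longrightarrow> pd p (B * A)"
  unfolding pd_def by (metis mult_smult_right)
lemma pd_sum: "(\<And>x. x \<in> S \<Longrightarrow> pd p (f x)) \<Longrightarrow> pd p (sum f S)"
proof (induction S rule: infinite_finite_induct)
  case (insert x F) thus ?case by (simp add: pd_add)
qed auto

lemma pd_of_nat: "pd (int p) (of_nat p)"
  unfolding pd_def by (rule exI[of _ 1]) (simp add: of_nat_poly)

lemma freshman: fixes A B :: "int poly" assumes p: "prime (p::nat)"
  shows "pd (int p) ((A + B) ^ p - A ^ p - B ^ p)"
proof -
  have p2: "p \<ge> 2" using p prime_ge_2_nat by auto
  let ?t = "\<lambda>k. of_nat (p choose k) * A ^ k * B ^ (p - k)"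
  have set: "{..p} = insert 0 (insert p {1..<p})" using p2 by auto
  have "(A + B) ^ p = (\<Sum>k\<le>p. ?t k)" by (rule binomial_ring)
  also have "\<dots> = ?t 0 + (?t p + (\<Sum>k\<in>{1..<p}. ?t k))"
    unfolding set using p2 by (simp add: sum.insert)
  finally have eq: "(A + B) ^ p - A ^ p - B ^ p = (\<Sum>k\<in>{1..<p}. ?t k)" by simp
  have "pd (int p) (?t k)" if k: "k \<in> {1..<p}" for k
  proof -
    have "p dvd (p choose k)" using k p by (intro dvd_choose_prime) auto
    then obtain c where c: "p choose k = p * c" by blast
    have "?t k = of_nat p * (of_nat c * A ^ k * B ^ (p - k))" unfolding c by (simp add: mult_ac)
    thus ?thesis using pd_mult_left[OF pd_of_nat] by metis
  qed
  thus ?thesis unfolding eq by (intro pd_sum) auto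
qed

lemma frobenius: fixes g :: "int poly" assumes p: "prime (p::nat)"
  shows "pd (int p) (pcompose g (monom 1 p) - g ^ p)"
proof (induction g)
  case 0
  thus ?case using p prime_gt_0_nat by (simp add: power_0_left)
next
  case (pCons c g)
  have p0: "p > 0" using p prime_gt_0_nat by auto
  have x: "pCons c g = [:c:] + [:0,1:] * g" by simp
  have xp: "([:0,1:] :: int poly) ^ p = monom 1 p" by (simp add: monom_altdef)
  have xg: "pCons 0 g ^ p = monom 1 p * g ^ p"
  proof -
    have "pCons 0 g = [:0,1:] * g" by simp
    thus ?thesis by (simp only: power_mult_distrib xp)
  qed
  have e1: "pd (int p) ((pCons c g) ^ p - [:c:] ^ p - ([:0,1:] * g) ^ p)"
    unfolding x by (rule freshman[OF p])
  obtain e where e: "c ^ p - c = int p * e" using int_fermat[OF p, of c] by blast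
  have "[:c:] ^ p - [:c:] = smult (int p) [:e:]"
    by (simp add: poly_const_pow e flip: smult_diff_right)
  hence e2: "pd (int p) ([:c:] ^ p - [:c:])" using pd_smult by metis
  have e3: "pd (int p) (monom 1 p * (pcompose g (monom 1 p) - g ^ p))"
    using pd_mult_right[OF pCons.IH] .
  have "pcompose (pCons c g) (monom 1 p) - (pCons c g) ^ p =
     monom 1 p * (pcompose g (monom 1 p) - g ^ p) - ([:c:] ^ p - [:c:]) 
     - ((pCons c g) ^ p - [:c:] ^ p - ([:0,1:] * g) ^ p)"
    by (simp add: pcompose_pCons xg algebra_simps)
  thus ?case using e1 e2 e3 by (metis pd_diff)
qed




lemma modp_const: fixes f W K :: "int poly" and p c :: int
  assumes p: "prime p" and lc: "\<bar>lead_coeff f\<bar> = 1" and df: "degree f \<ge> 1"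
    and eq: "[:c:] + smult p K = f * W"
  shows "p dvd c"
proof (rule ccontr)
  assume nc: "\<not> p dvd c"
  define J where "J = {i. \<not> p dvd coeff W i}"
  show False
  proof (cases "J = {}")
    case True
    have c1: "coeff (f * W) 0 = coeff f 0 * coeff W 0" by (simp add: coeff_mult)
    have c2: "p dvd coeff W 0" using True unfolding J_def by auto
    have c3: "coeff ([:c:] + smult p K) 0 = c + p * coeff K 0" by simp
    have "c + p * coeff K 0 = coeff f 0 * coeff W 0" using eq c1 c3 by metis
    hence "p dvd c + p * coeff K 0" using c2 by simp
    hence "p dvd c" by (simp add: dvd_add_left_iff)
    thus False using nc by simp
  next
    case False
    have fin: "finite J"
    proof (rule finite_subset[of _ "{..degree W}"])
      show "J \<subseteq> {..degree W}"
      proof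
        fix i assume "i \<in> J"
        hence "coeff W i \<noteq> 0" unfolding J_def by auto
        thus "i \<in> {..degree W}" using le_degree by auto
      qed
    qed auto
    define j where "j = Max J"
    have jJ: "j \<in> J" unfolding j_def using fin False by (rule Max_in)
    have jmax: "p dvd coeff W i" if ij: "i > j" for i
    proof (rule ccontr)
      assume "\<not> p dvd coeff W i"
      hence "i \<in> J" unfolding J_def by simp
      hence "i \<le> j" unfolding j_def using fin by simp
      thus False using ij by simp
    qed
    define d where "d = degree f"
    let ?t = "\<lambda>i. coeff f i * coeff W (d + j - i)"
    have "coeff (f * W) (d + j) = (\<Sum>i\<le>d+j. ?t i)" by (rule coeff_mult)
    also have "\<dots> = ?t d + (\<Sum>i\<in>{..d+j} - {d}. ?t i)"
      by (rule sum.remove) auto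
    finally have s: "coeff (f * W) (d + j) = ?t d + (\<Sum>i\<in>{..d+j} - {d}. ?t i)" .
    have "p dvd (\<Sum>i\<in>{..d+j} - {d}. ?t i)"
    proof (rule dvd_sum)
      fix i assume i: "i \<in> {..d+j} - {d}"
      show "p dvd ?t i"
      proof (cases "i < d")
        case True
        hence "p dvd coeff W (d + j - i)" by (intro jmax) auto
        thus ?thesis by simp
      next
        case False
        hence "i > d" using i by auto
        hence "coeff f i = 0" unfolding d_def by (simp add: coeff_eq_0)
        thus ?thesis by simp
      qed
    qed
    moreover have "coeff ([:c:] + smult p K) (d + j) = p * coeff K (d + j)"
      using df unfolding d_def by (cases "degree f + j") (auto simp: coeff_pCons)
    ultimately have teq: "?t d = p * coeff K (d + j) - (\<Sum>i\<in>{..d+j} - {d}. ?t i)" 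
      using s eq by simp
    have "p dvd p * coeff K (d + j) - (\<Sum>i\<in>{..d+j} - {d}. ?t i)"
      by (rule dvd_diff) (simp, fact)
    hence "p dvd ?t d" by (simp only: teq)
    hence "p dvd lead_coeff f * coeff W j" unfolding d_def by simp
    moreover have "lead_coeff f = 1 \<or> lead_coeff f = -1" using lc by linarith
    ultimately have "p dvd coeff W j" by auto
    thus False using jJ unfolding J_def by simp
  qed
qed




definition minpoly_of :: "complex \<Rightarrow> int poly \<Rightarrow> bool" where
  "minpoly_of w f \<longleftrightarrow> f \<noteq> 0 \<and> content f = 1 \<and> ip f w = 0 \<and>
     (\<forall>h. h \<noteq> 0 \<longrightarrow> ip h w = 0 \<longrightarrow> degree f \<le> degree h)"

lemma minpoly_exists: assumes "h \<noteq> 0" "ip h w = 0" shows "\<exists>f. minpoly_of w f"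
proof -
  let ?S = "{h. h \<noteq> 0 \<and> ip h w = 0}"
  define d where "d = (LEAST d. \<exists>h\<in>?S. degree h = d)"
  have "\<exists>h\<in>?S. degree h = d" unfolding d_def by (rule LeastI[of _ "degree h"]) (use assms in auto)
  then obtain g where g: "g \<noteq> 0" "ip g w = 0" "degree g = d" by auto
  have min: "d \<le> degree h'" if "h' \<noteq> 0" "ip h' w = 0" for h'
    unfolding d_def by (rule Least_le) (use that in auto)
  define f where "f = primitive_part g"
  have cg: "content g \<noteq> 0" using g by simp
  have "g = smult (content g) f" by (simp add: f_def)
  hence "ip g w = of_int (content g) * ip f w" by (metis ip_smult)
  hence "ip f w = 0" using g(2) cg by simp
  moreover have "f \<noteq> 0" using g by (simp add: f_def)
  moreover have "content f = 1" using g by (simp add: f_def)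
  moreover have "degree f = d" using g by (simp add: f_def)
  ultimately show ?thesis using min unfolding minpoly_of_def by auto
qed

lemma minpoly_dvd: assumes "minpoly_of w f" "ip h w = 0" shows "f dvd h"
proof -
  from assms have f0: "f \<noteq> 0" and c: "content f = 1" and fw: "ip f w = 0"
    and mn: "\<And>h. h \<noteq> 0 \<Longrightarrow> ip h w = 0 \<Longrightarrow> degree f \<le> degree h"
    unfolding minpoly_of_def by auto
  define r where "r = pseudo_mod h f"
  from pseudo_mod[OF f0, of h] obtain a q where a: "a \<noteq> 0" "smult a h = f * q + r"
    and r: "r = 0 \<or> degree r < degree f" unfolding r_def by blast
  have "ip r w = 0" using arg_cong[OF a(2), of "\<lambda>p. ip p w"] assms(2) fw by simp
  hence "r = 0" using r mn[of r] by force
  hence "f dvd smult a h" using a by simp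
  from dvd_smult_int[OF a(1) this] show ?thesis using primitive_part_prim[OF c] by simp
qed

lemma ip_eq_0_deg0: assumes "degree f = 0" "ip f w = 0" shows "f = 0"
proof -
  have "f = [:coeff f 0:]" using assms(1) by (metis degree_0_id)
  hence "ip f w = of_int (coeff f 0)" by (metis ip_const)
  hence "coeff f 0 = 0" using assms(2) by simp
  thus ?thesis using \<open>f = [:coeff f 0:]\<close> by simp
qed

definition Fm :: "nat \<Rightarrow> int poly" where "Fm m = monom 1 m - 1"

lemma ip_Fm[simp]: "ip (Fm m) z = z ^ m - 1" unfolding Fm_def by simp

lemma coeff_Fm: "coeff (Fm m) i = (if i = m then 1 else 0) - (if i = 0 then 1 else 0)"
  unfolding Fm_def by (simp add: coeff_monom)

lemma Fm_props: assumes "m > 0" shows "Fm m \<noteq> 0" "degree (Fm m) = m" "lead_coeff (Fm m) = 1"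
proof -
  have c: "coeff (Fm m) m = 1" using assms by (simp add: coeff_Fm)
  thus "Fm m \<noteq> 0" by auto
  have "degree (Fm m) \<le> m" by (rule degree_le) (auto simp: coeff_Fm)
  moreover have "m \<le> degree (Fm m)" using c by (intro le_degree) simp
  ultimately show d: "degree (Fm m) = m" by simp
  show "lead_coeff (Fm m) = 1" using c d by simp
qed

lemma minpoly_props: assumes "minpoly_of w f" "w ^ m = 1" "m > 0"
  shows "f dvd Fm m" "\<bar>lead_coeff f\<bar> = 1" "degree f \<ge> 1" "degree f \<le> m"
proof -
  show dv: "f dvd Fm m" using assms by (intro minpoly_dvd) auto
  then obtain v where v: "Fm m = f * v" by blast
  have "lead_coeff f * lead_coeff v = 1" using Fm_props[OF assms(3)] v by (metis lead_coeff_mult)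
  thus "\<bar>lead_coeff f\<bar> = 1" unfolding zmult_eq_1_iff by auto
  show "degree f \<ge> 1"
  proof (rule ccontr)
    assume "\<not> degree f \<ge> 1"
    hence "f = 0" using assms(1) unfolding minpoly_of_def by (intro ip_eq_0_deg0) auto
    thus False using assms(1) unfolding minpoly_of_def by simp
  qed
  have "v \<noteq> 0" using v Fm_props[OF assms(3)] by auto
  hence "degree (Fm m) = degree f + degree v" using v assms(1) unfolding minpoly_of_def
    by (simp add: degree_mult_eq)
  thus "degree f \<le> m" using Fm_props[OF assms(3)] by simp
qed




lemma pow_mod_eq: assumes "(z::complex) ^ m = 1" shows "z ^ (t mod m) = z ^ t"
proof -
  have "z ^ t = z ^ (m * (t div m) + t mod m)" by simp
  also have "\<dots> = (z ^ m) ^ (t div m) * z ^ (t mod m)" by (simp only: power_add power_mult)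
  finally show ?thesis using assms by simp
qed

lemma prim_pow_eq_1: assumes "primitive_root_unity m z" "m > 0" shows "z ^ t = 1 \<longleftrightarrow> m dvd t"
proof
  assume "z ^ t = 1"
  hence "z ^ (t mod m) = 1" using pow_mod_eq assms unfolding primitive_root_unity_def by metis
  moreover have "t mod m < m" using assms(2) by simp
  ultimately have "t mod m = 0" using assms(1) unfolding primitive_root_unity_def by (metis neq0_conv)
  thus "m dvd t" by auto
next
  assume "m dvd t"
  then obtain k where "t = m * k" by blast
  thus "z ^ t = 1" using assms unfolding primitive_root_unity_def by (simp add: power_mult)
qed

lemma prim_pow_coprime: assumes "primitive_root_unity m z" "m > 0" "coprime k m"
  shows "primitive_root_unity m (z ^ k)"
  unfolding primitive_root_unity_def
proof (intro conjI allI impI)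
  show "(z ^ k) ^ m = 1" using assms prim_pow_eq_1 by (metis dvd_triv_right power_mult)
  fix j assume j: "0 < j \<and> j < m"
  show "(z ^ k) ^ j \<noteq> 1"
  proof
    assume "(z ^ k) ^ j = 1"
    hence "z ^ (k * j) = 1" by (simp add: power_mult)
    hence "m dvd k * j" using prim_pow_eq_1[OF assms(1,2)] by simp
    moreover have "coprime m k" using assms(3) by (simp add: algebraic_semidom_class.coprime_commute)
    ultimately have "m dvd j" using coprime_dvd_mult_right_iff[of m k j] by simp
    thus False using j by (auto dest: dvd_imp_le)
  qed
qed

lemma frob_root:
  assumes prim: "primitive_root_unity m w" and m0: "m > 0" and f: "minpoly_of w f"
    and p: "prime (p::nat)" and pm: "\<not> p dvd m"
  shows "ip f (w ^ p) = 0"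
proof (rule ccontr)
  assume nz: "ip f (w ^ p) \<noteq> 0"
  have wm: "w ^ m = 1" using prim unfolding primitive_root_unity_def by simp
  have wpm: "(w ^ p) ^ m = 1" using wm by (metis power_mult mult.commute power_one)
  have F0: "Fm m \<noteq> 0" using Fm_props[OF m0] by simp
  obtain g where g: "minpoly_of (w ^ p) g"
    using minpoly_exists[OF F0, of "w ^ p"] wpm by auto
  have g0: "g \<noteq> 0" using g unfolding minpoly_of_def by simp
  have f0: "f \<noteq> 0" and fw: "ip f w = 0" using f unfolding minpoly_of_def by auto
  from minpoly_props[OF f wm m0] have lcf: "\<bar>lead_coeff f\<bar> = 1" and df: "degree f \<ge> 1" by auto
  have "g dvd Fm m" using minpoly_dvd[OF g] wpm by simp
  then obtain q where q: "Fm m = g * q" by blast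
  have gw: "ip g w \<noteq> 0"
  proof
    assume "ip g w = 0"
    hence "f dvd g" using minpoly_dvd[OF f] by simp
    then obtain c where c: "g = f * c" by blast
    have "ip g (w ^ p) = 0" using g unfolding minpoly_of_def by simp
    hence cz: "ip c (w ^ p) = 0" using nz c by simp
    have c0: "c \<noteq> 0" using c g0 by auto
    have "degree g \<le> degree c" using g cz c0 unfolding minpoly_of_def by auto
    moreover have "degree g = degree f + degree c" using c f0 c0 by (simp add: degree_mult_eq)
    ultimately show False using df by simp
  qed
  have "ip q w = 0" using arg_cong[OF q, of "\<lambda>P. ip P w"] wm gw by simp
  hence "f dvd q" using minpoly_dvd[OF f] by simp
  then obtain h where h: "q = f * h" by blast
  define G where "G = g * h"
  have FfG: "Fm m = f * G" unfolding G_def using q h by (simp add: mult_ac)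
  have "ip (pcompose g (monom 1 p)) w = 0" using g unfolding minpoly_of_def by simp
  hence "f dvd pcompose g (monom 1 p)" using minpoly_dvd[OF f] by simp
  then obtain w1 where w1: "pcompose g (monom 1 p) = f * w1" by blast
  from frobenius[OF p, of g] obtain k1 where k1: "pcompose g (monom 1 p) - g ^ p = smult (int p) k1"
    unfolding pd_def by blast
  have dF: "pderiv (Fm m) = monom (int m) (m - 1)" unfolding Fm_def by (simp add: pderiv_diff pderiv_monom)
  have "monom 1 1 * pderiv (Fm m) - smult (int m) (Fm m) = [:int m:]"
    unfolding dF using m0 by (simp add: Fm_def smult_diff_right mult_monom monom_0 smult_monom)
  also have "pderiv (Fm m) = f * pderiv G + G * pderiv f" unfolding FfG by (rule pderiv_mult)
  finally have bez0: "[:int m:] = monom 1 1 * (f * pderiv G + G * pderiv f) - smult (int m) (f * G)"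
    unfolding FfG by simp
  define U where "U = monom 1 1 * pderiv G - smult (int m) G"
  define T where "T = monom 1 1 * h * pderiv f"
  have bez: "[:int m:] = f * U + g * T" unfolding bez0 U_def T_def G_def by (simp add: algebra_simps)
  define X where "X = f * U + g * T"
  define S where "S = (\<Sum>i<p. (g * T) ^ (p - Suc i) * X ^ i)"
  have eq: "X ^ p - (g * T) ^ p = (X - g * T) * S"
    unfolding S_def by (rule power_diff_sumr2)
  have XgT: "X - g * T = f * U" unfolding X_def by simp
  have "X ^ p = (X ^ p - (g * T) ^ p) + (g * T) ^ p" by simp
  also have "\<dots> = (g * T) ^ p + f * U * S" unfolding eq XgT by (simp only: add.commute)
  finally have S: "X ^ p = (g * T) ^ p + f * U * S" .
  have "[:int m ^ p:] = X ^ p" unfolding X_def bez[symmetric] by (simp add: poly_const_pow)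
  also have "\<dots> = g ^ p * T ^ p + f * U * S" unfolding S by (simp add: power_mult_distrib)
  also have "g ^ p = f * w1 - smult (int p) k1" using k1 w1 by (simp add: algebra_simps)
  finally have "[:int m ^ p:] + smult (int p) (k1 * T ^ p) = f * (w1 * T ^ p + U * S)"
    by (simp add: algebra_simps)
  from modp_const[OF _ lcf df this] p have "int p dvd int m ^ p" by simp
  hence "int p dvd int m" using p by (metis prime_dvd_power prime_nat_int_transfer)
  thus False using pm by simp
qed




lemma minpoly_transfer:
  assumes f: "minpoly_of w f" and fv: "ip f v = 0" and vm: "v ^ m = 1" and m0: "m > 0"
  shows "minpoly_of v f"
proof -
  have f0: "f \<noteq> 0" and cf: "content f = 1" and fw: "ip f w = 0"
    and fmin: "\<And>h. h \<noteq> 0 \<Longrightarrow> ip h w = 0 \<Longrightarrow> degree f \<le> degree h"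
    using f unfolding minpoly_of_def by auto
  obtain g where g: "minpoly_of v g"
    using minpoly_exists[OF Fm_props(1)[OF m0], of v] vm by auto
  have g0: "g \<noteq> 0" and gv: "ip g v = 0"
    and gmin: "\<And>h. h \<noteq> 0 \<Longrightarrow> ip h v = 0 \<Longrightarrow> degree g \<le> degree h"
    using g unfolding minpoly_of_def by auto
  have "g dvd f" using minpoly_dvd[OF g fv] .
  then obtain c where c: "f = g * c" by blast
  have c0: "c \<noteq> 0" using c f0 by auto
  have dgf: "degree f \<le> degree g"
  proof (cases "ip g w = 0")
    case True thus ?thesis using fmin g0 by simp
  next
    case False
    hence "ip c w = 0" using fw c by simp
    hence "degree f \<le> degree c" using fmin c0 by simp
    moreover have "degree f = degree g + degree c" using c g0 c0 by (simp add: degree_mult_eq)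
    ultimately have "degree g = 0" by simp
    hence "g = 0" using gv by (rule ip_eq_0_deg0)
    thus ?thesis using g0 by simp
  qed
  show ?thesis unfolding minpoly_of_def
    using f0 cf fv dgf gmin order_trans by blast
qed

lemma minpoly_coprime:
  assumes prim: "primitive_root_unity m z" and m1: "m > 1" and f: "minpoly_of z f"
  shows "coprime k m \<Longrightarrow> minpoly_of (z ^ k) f"
proof (induction k rule: less_induct)
  case (less k)
  have m0: "m > 0" using m1 by simp
  show ?case
  proof (cases "k \<le> 1")
    case True
    moreover have "k \<noteq> 0"
    proof
      assume "k = 0"
      hence "coprime 0 m" using less.prems by simp
      hence "is_unit m" by (simp only: algebraic_semidom_class.coprime_0_left_iff)
      thus False using m1 by simp
    qed
    ultimately have "k = 1" by simp
    thus ?thesis using f by simp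
  next
    case False
    then obtain p where p: "prime p" "p dvd k" using prime_factor_nat[of k] by auto
    then obtain k' where k': "k = p * k'" by blast
    have "k' \<noteq> 0" using False k' by (metis mult_0_right zero_le)
    moreover have "p \<ge> 2" using p prime_ge_2_nat by auto
    ultimately have "k' < k" using k' by simp
    have ck': "coprime k' m" using less.prems k' by simp
    have IH: "minpoly_of (z ^ k') f" using less.IH[OF \<open>k' < k\<close> ck'] .
    have pr: "primitive_root_unity m (z ^ k')" using prim_pow_coprime[OF prim m0 ck'] .
    have pm: "\<not> p dvd m"
    proof
      assume "p dvd m"
      hence "p dvd gcd k m" using p by simp
      thus False using less.prems p by (simp add: prime_gt_1_nat)
    qed
    have "ip f ((z ^ k') ^ p) = 0" using frob_root[OF pr m0 IH p(1) pm] .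
    moreover have zk: "(z ^ k') ^ p = z ^ k" using k' by (simp add: power_mult mult.commute)
    ultimately have "ip f (z ^ k) = 0" by simp
    moreover have "(z ^ k) ^ m = 1" using prim unfolding primitive_root_unity_def
      by (metis power_mult mult.commute power_one)
    ultimately show ?thesis using minpoly_transfer[OF IH _ _ m0] zk by metis
  qed
qed

lemma minpoly_degree:
  assumes prim: "primitive_root_unity m z" and m1: "m > 1" and f: "minpoly_of z f"
  shows "degree f \<ge> totient m"
proof -
  have m0: "m > 0" using m1 by simp
  let ?cf = "map_poly (of_int :: int \<Rightarrow> complex) f"
  have f0: "f \<noteq> 0" using f unfolding minpoly_of_def by simp
  have cf0: "?cf \<noteq> 0" using f0 by simp
  have sub: "(\<lambda>k. z ^ k) ` totatives m \<subseteq> {x. poly ?cf x = 0}"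
  proof
    fix x assume "x \<in> (\<lambda>k. z ^ k) ` totatives m"
    then obtain k where k: "k \<in> totatives m" "x = z ^ k" by blast
    have "coprime k m" using k by (simp add: totatives_def)
    hence "minpoly_of (z ^ k) f" using minpoly_coprime[OF prim m1 f] by simp
    thus "x \<in> {x. poly ?cf x = 0}" using k unfolding minpoly_of_def ip_def by simp
  qed
  have inj: "inj_on (\<lambda>k. z ^ k) (totatives m)"
  proof (rule inj_onI)
    fix i j assume i: "i \<in> totatives m" and j: "j \<in> totatives m" and eq: "z ^ i = z ^ j"
    have z0: "z \<noteq> 0" using prim m0 unfolding primitive_root_unity_def by (metis power_0_left zero_neq_one neq0_conv)
    show "i = j"
    proof (rule ccontr)
      assume "i \<noteq> j"
      { fix a b assume ab: "a < b" "a \<in> totatives m" "b \<in> totatives m" "z ^ a = z ^ b"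
        have "z ^ b = z ^ a * z ^ (b - a)" using ab(1) by (simp flip: power_add)
        hence "z ^ (b - a) = 1" using ab(4) z0 by simp
        hence "m dvd b - a" using prim_pow_eq_1[OF prim m0] by simp
        moreover have "b - a < m" "b - a > 0" using ab by (auto simp: totatives_def)
        ultimately have False by (auto dest: dvd_imp_le) }
      thus False using i j eq \<open>i \<noteq> j\<close> by (metis linorder_neqE_nat)
    qed
  qed
  have "totient m = card ((\<lambda>k. z ^ k) ` totatives m)" unfolding totient_def using card_image[OF inj] by simp
  also have "\<dots> \<le> card {x. poly ?cf x = 0}" by (rule card_mono[OF poly_roots_finite[OF cf0] sub])
  also have "\<dots> \<le> degree ?cf" by (rule card_poly_roots_bound[OF cf0])
  also have "degree ?cf = degree f" by simp
  finally show ?thesis .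
qed




lemma sum_list_le_length: "(\<And>x. x \<in> set xs \<Longrightarrow> g x \<le> (1::real)) \<Longrightarrow> sum_list (map g xs) \<le> real (length xs)"
  by (induction xs) (auto simp: add_mono)

lemma minpoly_coeff_bound:
  assumes f: "minpoly_of w f" and wm: "w ^ m = 1" and m0: "m > 0"
  shows "\<bar>coeff f k\<bar> \<le> 4 ^ m"
proof -
  from minpoly_props[OF f wm m0] have dv: "f dvd Fm m" and dfm: "degree f \<le> m" by auto
  have F0: "Fm m \<noteq> 0" and dF: "degree (Fm m) = m" using Fm_props[OF m0] by auto
  have c1: "\<bar>coeff (Fm m) i\<bar> \<le> 1" for i by (auto simp: coeff_Fm)
  have "(\<Sum>a\<leftarrow>coeffs (Fm m). real_of_int (a * a)) \<le> real (length (coeffs (Fm m)))"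
  proof (rule sum_list_le_length)
    fix x assume "x \<in> set (coeffs (Fm m))"
    then obtain i where i: "i < length (coeffs (Fm m))" "x = coeffs (Fm m) ! i"
      by (metis in_set_conv_nth)
    have "i \<le> degree (Fm m)" using i(1) F0 by (simp add: length_coeffs)
    hence "x = coeff (Fm m) i" using i(2) coeffs_nth[OF F0] by simp
    hence "\<bar>x\<bar> \<le> 1" using c1 by simp
    hence "x * x \<le> 1" by (metis abs_mult_self_eq abs_ge_zero mult_le_one)
    thus "real_of_int (x * x) \<le> 1" by linarith
  qed
  also have "\<dots> = real m + 1" using F0 dF by (simp add: length_coeffs)
  also have "\<dots> \<le> (2 ^ m) ^ 2"
  proof -
    have "m < 2 ^ m" by (rule less_exp)
    hence "m + 1 \<le> (2::nat) ^ m" by linarith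
    hence "real (m + 1) \<le> real ((2::nat) ^ m)" by (simp only: of_nat_le_iff)
    hence "real m + 1 \<le> 2 ^ m" by simp
    also have "(2::real) ^ m \<le> (2 ^ m) ^ 2" by (simp add: power2_eq_square)
    finally show ?thesis .
  qed
  finally have S: "(\<Sum>a\<leftarrow>coeffs (Fm m). real_of_int (a * a)) \<le> (2 ^ m) ^ 2" .
  have "mahler_measure (Fm m) \<le> sqrt (real_of_int (\<Sum>a\<leftarrow>coeffs (Fm m). a * a))"
    by (rule Landau_inequality_mahler_measure)
  also have "real_of_int (\<Sum>a\<leftarrow>coeffs (Fm m). a * a) = (\<Sum>a\<leftarrow>coeffs (Fm m). real_of_int (a * a))"
    by (simp add: of_int_hom.hom_sum_list o_def)
  also have "sqrt \<dots> \<le> 2 ^ m" by (rule real_le_lsqrt) (use S in auto)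
  finally have mF: "mahler_measure (Fm m) \<le> 2 ^ m" .
  have mf: "mahler_measure f \<le> 2 ^ m" using mahler_measure_dvd[OF F0 dv] mF by linarith
  have "real_of_int \<bar>coeff f k\<bar> \<le> real (degree f choose k) * mahler_measure f" by (rule Mignotte_bound)
  also have "\<dots> \<le> 2 ^ m * 2 ^ m"
  proof (rule mult_mono)
    have "degree f choose k \<le> 2 ^ degree f" by (rule binomial_le_pow2)
    also have "(2::nat) ^ degree f \<le> 2 ^ m" using dfm by (simp add: power_increasing)
    finally have "real (degree f choose k) \<le> real ((2::nat) ^ m)" by (simp only: of_nat_le_iff)
    thus "real (degree f choose k) \<le> 2 ^ m" by simp
  qed (use mf mahler_measure_ge_0 in auto)
  also have "(2::real) ^ m * 2 ^ m = 4 ^ m" by (simp flip: power_mult_distrib)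
  finally have "real_of_int \<bar>coeff f k\<bar> \<le> real_of_int (4 ^ m)" by simp
  thus ?thesis by (simp only: of_int_le_iff)
qed

lemma reduce:
  fixes f :: "int poly" and B :: int
  assumes lc: "\<bar>lead_coeff f\<bar> = 1" and df: "degree f \<ge> 1" and Bf: "\<And>i. \<bar>coeff f i\<bar> \<le> B"
  shows "degree h < degree f + k \<Longrightarrow> (\<And>i. \<bar>coeff h i\<bar> \<le> M) \<Longrightarrow>
    \<exists>r. degree r < degree f \<and> f dvd (h - r) \<and> (\<forall>i. \<bar>coeff r i\<bar> \<le> M * (1 + B) ^ k)"
proof (induction k arbitrary: h M)
  case 0
  thus ?case by (intro exI[of _ h]) auto
next
  case (Suc k)
  have M0: "M \<ge> 0" using Suc.prems(2)[of 0] by simp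
  have B0: "B \<ge> 0" using Bf[of 0] by simp
  show ?case
  proof (cases "degree h < degree f + k")
    case True
    from Suc.IH[OF True Suc.prems(2)] obtain r where r: "degree r < degree f" "f dvd (h - r)"
      "\<forall>i. \<bar>coeff r i\<bar> \<le> M * (1 + B) ^ k" by blast
    have mono: "M * (1 + B) ^ k \<le> M * (1 + B) ^ Suc k"
      using M0 B0 by (intro mult_left_mono power_increasing) auto
    have "\<forall>i. \<bar>coeff r i\<bar> \<le> M * (1 + B) ^ Suc k" using r(3) mono by (meson order_trans)
    thus ?thesis using r(1,2) by blast
  next
    case False
    define d where "d = degree f"
    have dh: "degree h = d + k" using False Suc.prems(1) unfolding d_def by simp
    define c where "c = coeff h (d + k) * lead_coeff f"
    define h' where "h' = h - smult c (monom 1 k * f)"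
    have ch': "coeff h' i = coeff h i - c * (if i < k then 0 else coeff f (i - k))" for i
      unfolding h'_def by (simp add: coeff_monom_mult)
    have lc2: "lead_coeff f * lead_coeff f = 1" using lc abs_mult_self_eq[of "lead_coeff f"] by simp
    have cM: "\<bar>c\<bar> \<le> M" unfolding c_def using Suc.prems(2)[of "d + k"] lc by (simp add: abs_mult)
    have bnd: "\<bar>coeff h' i\<bar> \<le> M * (1 + B)" for i
    proof -
      have "\<bar>c * (if i < k then 0 else coeff f (i - k))\<bar> \<le> M * B"
        using cM Bf[of "i - k"] M0 B0 by (auto simp: abs_mult intro: mult_mono)
      moreover have "\<bar>coeff h i\<bar> \<le> M" by (rule Suc.prems(2))
      ultimately show ?thesis unfolding ch' by (simp add: algebra_simps)
    qed
    have "degree h' \<le> d + k - 1"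
    proof (rule degree_le, intro allI impI)
      fix i assume i: "d + k - 1 < i"
      show "coeff h' i = 0"
      proof (cases "i = d + k")
        case True
        have "coeff h' i = coeff h (d + k) - coeff h (d + k) * (lead_coeff f * lead_coeff f)"
          unfolding ch' c_def using True d_def by simp
        thus ?thesis using lc2 by simp
      next
        case False
        hence "i > d + k" using i df d_def by simp
        hence "coeff h i = 0" "coeff f (i - k) = 0" using dh unfolding d_def
          by (auto intro: coeff_eq_0)
        thus ?thesis unfolding ch' by simp
      qed
    qed
    hence dh': "degree h' < degree f + k" using df unfolding d_def by simp
    from Suc.IH[OF dh' bnd] obtain r where r: "degree r < degree f" "f dvd (h' - r)"
      "\<forall>i. \<bar>coeff r i\<bar> \<le> M * (1 + B) * (1 + B) ^ k" by blast
    have "h - r = (h' - r) + f * smult c (monom 1 k)" unfolding h'_def by (simp add: algebra_simps)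
    moreover have "f dvd (h' - r) + f * smult c (monom 1 k)" using r(2) by (intro dvd_add) (simp_all only: dvd_triv_left)
    ultimately have "f dvd (h - r)" by (simp only:)
    moreover have "\<forall>i. \<bar>coeff r i\<bar> \<le> M * (1 + B) ^ Suc k" using r(3) by (simp add: mult_ac)
    ultimately show ?thesis using r(1) by blast
  qed
qed




theorem mainTheorem7:
  shows "\<exists>C::real. \<forall>(m::nat) (n::nat) (X::nat \<Rightarrow> nat \<Rightarrow> int) (\<zeta>::complex) (a::nat \<Rightarrow> int).
    m \<ge> 2 \<longrightarrow> n \<ge> 2 \<longrightarrow>
    (\<forall>i<n. \<forall>j<n. X i j \<in> {0, 1}) \<longrightarrow>
    primitive_root_unity m \<zeta> \<longrightarrow>
    (\<Sum>i<totient m. of_int (a i) * \<zeta> ^ i) = zper \<zeta> n (\<lambda>i j. of_int (X i j)) \<longrightarrow>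
    (\<forall>i<totient m. a i \<noteq> 0 \<longrightarrow>
       ln \<bar>real_of_int (a i)\<bar> \<le> C * (real m ^ 2 * ln (real m) + real n * ln (real n)))"
proof (intro exI[of _ 3] allI impI)
  fix m n :: nat and X :: "nat \<Rightarrow> nat \<Rightarrow> int" and z :: complex and a :: "nat \<Rightarrow> int" and i :: nat
  assume m2: "m \<ge> 2" and n2: "n \<ge> 2" and X01: "\<forall>i<n. \<forall>j<n. X i j \<in> {0, 1}"
    and prim: "primitive_root_unity m z"
    and rep: "(\<Sum>i<totient m. of_int (a i) * z ^ i) = zper z n (\<lambda>i j. of_int (X i j))"
    and it: "i < totient m" and ai0: "a i \<noteq> 0"
  have m0: "m > 0" and m1: "m > 1" using m2 by auto
  have zm: "z ^ m = 1" using prim unfolding primitive_root_unity_def by simp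
  obtain f where f: "minpoly_of z f"
    using minpoly_exists[OF Fm_props(1)[OF m0], of z] zm by auto
  from minpoly_props[OF f zm m0] have lc: "\<bar>lead_coeff f\<bar> = 1" and df: "degree f \<ge> 1" by auto
  have dtot: "degree f \<ge> totient m" by (rule minpoly_degree[OF prim m1 f])
  have cb: "\<And>k. \<bar>coeff f k\<bar> \<le> 4 ^ m" using minpoly_coeff_bound[OF f zm m0] .
  define P where "P = {\<sigma>. \<sigma> permutes {..<n}}"
  define pr where "pr \<sigma> = (\<Prod>i<n. X i (\<sigma> i))" for \<sigma>
  define h where "h = (\<Sum>\<sigma>\<in>P. monom (pr \<sigma>) (inv_num n \<sigma> mod m))"
  have finP: "finite P" unfolding P_def by (rule finite_permutations) simp
  have cardP: "card P = fact n" unfolding P_def by (rule card_permutations) auto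
  have prb: "\<bar>pr \<sigma>\<bar> \<le> 1" if s: "\<sigma> \<in> P" for \<sigma>
  proof -
    have "\<bar>pr \<sigma>\<bar> = (\<Prod>i<n. \<bar>X i (\<sigma> i)\<bar>)" unfolding pr_def by (simp add: abs_prod)
    also have "\<dots> \<le> 1"
    proof (rule prod_le_1)
      fix x assume x: "x \<in> {..<n}"
      have "\<sigma> x < n" using s x permutes_in_image[of \<sigma> "{..<n}" x] unfolding P_def by auto
      hence "X x (\<sigma> x) \<in> {0, 1}" using X01 x by auto
      thus "0 \<le> \<bar>X x (\<sigma> x)\<bar> \<and> \<bar>X x (\<sigma> x)\<bar> \<le> 1" by auto
    qed
    finally show ?thesis .
  qed
  have hval: "ip h z = zper z n (\<lambda>i j. of_int (X i j))"
  proof -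
    have "ip h z = (\<Sum>\<sigma>\<in>P. of_int (pr \<sigma>) * z ^ (inv_num n \<sigma> mod m))"
      unfolding h_def by (simp add: ip_sum)
    also have "\<dots> = (\<Sum>\<sigma>\<in>P. z ^ inv_num n \<sigma> * (\<Prod>i<n. of_int (X i (\<sigma> i))))"
      by (intro sum.cong refl) (simp add: pow_mod_eq[OF zm] pr_def mult.commute)
    finally show ?thesis unfolding zper_def P_def .
  qed
  have hdeg: "degree h < degree f + m"
  proof -
    have "degree h \<le> m - 1" unfolding h_def
    proof (rule degree_sum_le[OF finP])
      fix \<sigma> assume "\<sigma> \<in> P"
      have "inv_num n \<sigma> mod m < m" using m0 by simp
      thus "degree (monom (pr \<sigma>) (inv_num n \<sigma> mod m)) \<le> m - 1"
        using degree_monom_le[of "pr \<sigma>" "inv_num n \<sigma> mod m"] by linarith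
    qed
    thus ?thesis using m0 by linarith
  qed
  have hcoef: "\<bar>coeff h j\<bar> \<le> fact n" for j
  proof -
    have "\<bar>coeff h j\<bar> \<le> (\<Sum>\<sigma>\<in>P. \<bar>coeff (monom (pr \<sigma>) (inv_num n \<sigma> mod m)) j\<bar>)"
      unfolding h_def coeff_sum by (rule sum_abs)
    also have "\<dots> \<le> of_nat (card P) * 1"
      by (rule sum_bounded_above) (auto simp: coeff_monom prb)
    also have "\<dots> = fact n" using cardP by simp
    finally show ?thesis .
  qed
  from reduce[OF lc df cb hdeg hcoef] obtain r where r: "degree r < degree f" "f dvd (h - r)"
    "\<forall>j. \<bar>coeff r j\<bar> \<le> fact n * (1 + 4 ^ m) ^ m" by blast
  have rval: "ip r z = ip h z"
  proof -
    obtain q where "h - r = f * q" using r(2) by blast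
    hence "ip h z - ip r z = ip f z * ip q z" by (metis ip_diff ip_mult)
    thus ?thesis using f unfolding minpoly_of_def by simp
  qed
  define A where "A = (\<Sum>i<totient m. monom (a i) i)"
  have Aval: "ip A z = (\<Sum>i<totient m. of_int (a i) * z ^ i)" unfolding A_def by (simp add: ip_sum)
  have coeffA: "coeff A j = (if j < totient m then a j else 0)" for j
    unfolding A_def coeff_sum by (simp add: coeff_monom)
  have rA: "r = A"
  proof (rule ccontr)
    assume ne: "r \<noteq> A"
    have "ip (r - A) z = 0" using rval hval Aval rep by simp
    hence "degree f \<le> degree (r - A)" using f ne unfolding minpoly_of_def by simp
    moreover have "degree (r - A) \<le> degree f - 1"
    proof (rule degree_le, intro allI impI)
      fix j assume j: "degree f - 1 < j"
      hence "coeff r j = 0" using r(1) by (intro coeff_eq_0) linarith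
      moreover have "coeff A j = 0" using j dtot coeffA by simp
      ultimately show "coeff (r - A) j = 0" by simp
    qed
    ultimately show False using df by linarith
  qed
  have ab: "\<bar>a i\<bar> \<le> fact n * (1 + 4 ^ m) ^ m" using r(3) rA coeffA[of i] it by metis
  have "real_of_int \<bar>a i\<bar> \<le> real_of_int (fact n * (1 + 4 ^ m) ^ m)" using ab by (simp only: of_int_le_iff)
  hence ab1: "\<bar>real_of_int (a i)\<bar> \<le> fact n * (1 + 4 ^ m) ^ m" by simp
  have f1: "(fact n :: real) \<le> real n ^ n" using fact_le_power[of n] by simp
  have b1: "(1 + 4 ^ m :: real) \<le> 2 ^ (3 * m)"
  proof -
    have "(1::real) \<le> 4 ^ m" by simp
    hence "(1 + 4 ^ m :: real) \<le> 2 * 4 ^ m" by simp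
    also have "(2 * 4 ^ m :: real) = 2 ^ (2 * m + 1)" by (simp add: power_mult)
    also have "(2::real) ^ (2 * m + 1) \<le> 2 ^ (3 * m)" using m0 by (intro power_increasing) auto
    finally show ?thesis .
  qed
  have "(1 + 4 ^ m :: real) ^ m \<le> (2 ^ (3 * m)) ^ m" using b1 by (intro power_mono) auto
  also have "\<dots> = 2 ^ (3 * m * m)" by (simp add: power_mult)
  finally have b2: "(1 + 4 ^ m :: real) ^ m \<le> 2 ^ (3 * m * m)" .
  have pos: "\<bar>real_of_int (a i)\<bar> > 0" using ai0 by simp
  have "\<bar>real_of_int (a i)\<bar> \<le> real n ^ n * 2 ^ (3 * m * m)"
    using ab1 f1 b2 by (meson order_trans mult_mono fact_ge_zero zero_le_power zero_le_numeral add_nonneg_nonneg zero_le_one of_nat_0_le_iff)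
  hence "ln \<bar>real_of_int (a i)\<bar> \<le> ln (real n ^ n * 2 ^ (3 * m * m))"
    using pos n2 by (subst ln_le_cancel_iff) auto
  also have "\<dots> = real n * ln (real n) + real (3 * m * m) * ln 2"
    using n2 by (simp add: ln_mult_pos ln_realpow)
  finally have L1: "ln \<bar>real_of_int (a i)\<bar> \<le> real n * ln (real n) + real (3 * m * m) * ln 2" .
  have l2: "ln (2::real) \<le> ln (real m)" using m2 by simp
  have "real (3 * m * m) * ln 2 \<le> real (3 * m * m) * ln (real m)" using l2 by (intro mult_left_mono) auto
  also have "\<dots> = 3 * (real m ^ 2 * ln (real m))" by (simp add: power2_eq_square)
  finally have L2: "real (3 * m * m) * ln 2 \<le> 3 * (real m ^ 2 * ln (real m))" .
  have L3: "real n * ln (real n) \<ge> 0" using n2 by simp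
  show "ln \<bar>real_of_int (a i)\<bar> \<le> 3 * (real m ^ 2 * ln (real m) + real n * ln (real n))"
  proof -
    have gen: "\<And>x y u v :: real. x \<le> u + y \<Longrightarrow> y \<le> 3 * v \<Longrightarrow> 0 \<le> u \<Longrightarrow> x \<le> 3 * (v + u)"
      by (smt (verit))
    show ?thesis by (rule gen[OF L1 L2 L3])
  qed
qed


end
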